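(* If $X$ is a topological quandle with the indiscrete topology, then $\bar H^W_n(X)\cong H^W_{n+1}(X)$ for every $n\ge0$ and $W\in\{R,D,Q\}$.
   Context: A quandle is a set with a binary operation $\triangleright$ such that $x\triangleright x=x$, each $\beta_y(x)=x\triangleright y$ is bijective, and $(x\triangleright y)\triangleright z=(x\triangleright z)\triangleright(y\triangleright z)$. A topological quandle is a topological space with a continuous quandle operation such that every $\beta_y$ is a homeomorphism. For a topological quandle $X$, $\bar C^R_n(X)$ is the free abelian group on singular $n$-simplices $\sigma:\Delta^n\to X$ modulo identifying two simplices with the same ordered vertex tuple; thus it is free abelian on the tuples $\sigma_{[x_1,\dots,x_{n+1}]}$ ($x_i=\sigma(e_{i-1})$) that are vertex tuples of some singular $n$-simplex. Its boundary is $\partial_n\sigma_{[x_1,\dots,x_{n+1}]}=\sum_{i=2}^{n+1}(-1)^i\big(\sigma_{[x_1,\dots,\hat{x_i},\dots,x_{n+1}]}-\sigma_{[x_1\triangleright x_i,\dots,x_{i-1}\triangleright x_i,x_{i+1},\dots,x_{n+1}]}\big)$. For $n\ge1$, $\bar C^D_n(X)$ is the subgroup generated by $\sigma_{[x_1,\dots,x_{n+1}]}$ with $x_i=x_{i+1}$ for some $i\in\{1,\dots,n\}$, and $\bar C^D_0(X)=0$; it is a subcomplex, and $\bar C^Q_n(X)=\bar C^R_n(X)/\bar C^D_n(X)$ with the induced boundary. $\bar H^W_n(X)$ denotes the homology of $\bar C^W_*(X)$. The rack complex $C^R_n(X)$ is free abelian on $X^n$ with boundary $\partial^R_n(x_1,\dots,x_n)=\sum_{i=2}^n(-1)^i[(x_1,\dots,\hat{x_i},\dots,x_n)-(x_1\triangleright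 x_i,\dots,x_{i-1}\triangleright x_i,x_{i+1},\dots,x_n)]$; $C^D_n(X)\subset C^R_n(X)$ is generated by tuples with $x_i=x_{i+1}$ for some $i\in\{1,\dots,n-1\}$; $C^Q_n(X)=C^R_n(X)/C^D_n(X)$; $H^W_n(X)$ ($W=R,D,Q$) are the homologies of these complexes (rack, degenerate and quandle homology of the underlying quandle). *)

theory Defs
  imports "HOL-Homology.Homology"
begin

definition quandle :: "'a set \<Rightarrow> ('a \<Rightarrow> 'a \<Rightarrow> 'a) \<Rightarrow> bool" where
  "quandle Q op \<longleftrightarrow>
     (\<forall>x\<in>Q. \<forall>y\<in>Q. op x y \<in> Q) \<and>
     (\<forall>x\<in>Q. op x x = x) \<and>
     (\<forall>y\<in>Q. bij_betw (\<lambda>x. op x y) Q Q) \<and>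
     (\<forall>x\<in>Q. \<forall>y\<in>Q. \<forall>z\<in>Q. op (op x y) z = op (op x z) (op y z))"

definition topological_quandle :: "'a topology \<Rightarrow> ('a \<Rightarrow> 'a \<Rightarrow> 'a) \<Rightarrow> bool" where
  "topological_quandle T op \<longleftrightarrow>
     quandle (topspace T) op \<and>
     continuous_map (prod_topology T T) T (\<lambda>(x, y). op x y) \<and>
     (\<forall>y\<in>topspace T. homeomorphic_map T T (\<lambda>x. op x y))"

definition indiscrete :: "'a topology \<Rightarrow> bool" where
  "indiscrete T \<longleftrightarrow> (\<forall>U. openin T U \<longleftrightarrow> U = {} \<or> U = topspace T)"

text \<open>Tuples are lists; list index i (0-based) is the paper's index i+1.\<close>

definition face_del :: "nat \<Rightarrow> 'a list \<Rightarrow> 'a list" where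
  "face_del i xs = take i xs @ drop (Suc i) xs"

definition face_act :: "('a \<Rightarrow> 'a \<Rightarrow> 'a) \<Rightarrow> nat \<Rightarrow> 'a list \<Rightarrow> 'a list" where
  "face_act op i xs = map (\<lambda>y. op y (xs ! i)) (take i xs) @ drop (Suc i) xs"

definition bd_gen :: "('a \<Rightarrow> 'a \<Rightarrow> 'a) \<Rightarrow> 'a list \<Rightarrow> ('a list \<Rightarrow>\<^sub>0 int)" where
  "bd_gen op xs = (\<Sum>i\<in>{1..<length xs}.
      frag_cmul ((-1) ^ Suc i) (frag_of (face_del i xs) - frag_of (face_act op i xs)))"

definition bd :: "('a \<Rightarrow> 'a \<Rightarrow> 'a) \<Rightarrow> ('a list \<Rightarrow>\<^sub>0 int) \<Rightarrow> ('a list \<Rightarrow>\<^sub>0 int)" where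
  "bd op = frag_extend (bd_gen op)"

definition rack_gens :: "'a set \<Rightarrow> nat \<Rightarrow> 'a list set" where
  "rack_gens Q n = {xs. length xs = n \<and> set xs \<subseteq> Q}"

definition bar_gens :: "'a topology \<Rightarrow> nat \<Rightarrow> 'a list set" where
  "bar_gens T n = {map (\<lambda>i. simplicial_vertex i \<sigma>) [0..<Suc n] | \<sigma>. singular_simplex n T \<sigma>}"

definition degen :: "'a list \<Rightarrow> bool" where
  "degen xs \<longleftrightarrow> (\<exists>i. Suc i < length xs \<and> xs ! i = xs ! Suc i)"

definition degen_gens :: "(nat \<Rightarrow> 'a list set) \<Rightarrow> nat \<Rightarrow> 'a list set" where
  "degen_gens gens n = {xs \<in> gens n. degen xs}"

text \<open>G n is the degree-n chain group, d m : G (Suc m) \<rightarrow> G m the boundary.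
  Degree-0 cycles are all of G 0.\<close>
definition chain_homology ::
  "(nat \<Rightarrow> ('b, 'm) monoid_scheme) \<Rightarrow> (nat \<Rightarrow> 'b \<Rightarrow> 'b) \<Rightarrow> nat \<Rightarrow> 'b set monoid" where
  "chain_homology G d n =
     subgroup_generated (G n)
       (if n = 0 then carrier (G 0) else kernel (G n) (G (n - 1)) (d (n - 1)))
     Mod (d n ` carrier (G (Suc n)))"

definition homR :: "(nat \<Rightarrow> 'a list set) \<Rightarrow> ('a \<Rightarrow> 'a \<Rightarrow> 'a) \<Rightarrow> nat \<Rightarrow> ('a list \<Rightarrow>\<^sub>0 int) set monoid" where
  "homR gens op n = chain_homology (\<lambda>m. free_Abelian_group (gens m)) (\<lambda>m. bd op) n"

definition homD :: "(nat \<Rightarrow> 'a list set) \<Rightarrow> ('a \<Rightarrow> 'a \<Rightarrow> 'a) \<Rightarrow> nat \<Rightarrow> ('a list \<Rightarrow>\<^sub>0 int) set monoid" where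
  "homD gens op n = chain_homology (\<lambda>m. free_Abelian_group (degen_gens gens m)) (\<lambda>m. bd op) n"

text \<open>Quotient complex C/D: groups C_n Mod D_n, with the induced boundary on cosets.\<close>
definition quot_group :: "(nat \<Rightarrow> 'a list set) \<Rightarrow> nat \<Rightarrow> ('a list \<Rightarrow>\<^sub>0 int) set monoid" where
  "quot_group gens m = free_Abelian_group (gens m) Mod carrier (free_Abelian_group (degen_gens gens m))"

definition quot_bd :: "(nat \<Rightarrow> 'a list set) \<Rightarrow> ('a \<Rightarrow> 'a \<Rightarrow> 'a) \<Rightarrow> nat
    \<Rightarrow> ('a list \<Rightarrow>\<^sub>0 int) set \<Rightarrow> ('a list \<Rightarrow>\<^sub>0 int) set" where
  "quot_bd gens op m A = the_elem ((\<lambda>c. carrier (free_Abelian_group (degen_gens gens m))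
       #>\<^bsub>free_Abelian_group (gens m)\<^esub> bd op c) ` A)"

definition homQ :: "(nat \<Rightarrow> 'a list set) \<Rightarrow> ('a \<Rightarrow> 'a \<Rightarrow> 'a) \<Rightarrow> nat \<Rightarrow> ('a list \<Rightarrow>\<^sub>0 int) set set monoid" where
  "homQ gens op n = chain_homology (quot_group gens) (quot_bd gens op) n"

end

theory Submission
  imports Defs
begin

lemma indisc_cont:
  assumes "indiscrete T" "f \<in> topspace X \<rightarrow> topspace T"
  shows "continuous_map X T f"
  unfolding continuous_map_def
proof (intro conjI allI impI)
  show "f \<in> topspace X \<rightarrow> topspace T" by (rule assms(2))
  fix U assume "openin T U"
  then have "U = {} \<or> U = topspace T" using assms(1) unfolding indiscrete_def by blast
  then show "openin X {x \<in> topspace X. f x \<in> U}"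
  proof
    assume "U = {}" then show ?thesis by simp
  next
    assume "U = topspace T"
    then have "{x \<in> topspace X. f x \<in> U} = topspace X" using assms(2) by blast
    then show ?thesis by simp
  qed
qed

lemma least_basis: "(LEAST j::nat. (if j = i then 1 else (0::real)) = 1) = i"
  by (rule Least_equality) (auto split: if_splits)

lemma bar_eq:
  assumes "indiscrete T"
  shows "bar_gens T n = rack_gens (topspace T) (Suc n)"
proof
  show "bar_gens T n \<subseteq> rack_gens (topspace T) (Suc n)"
  proof
    fix xs assume "xs \<in> bar_gens T n"
    then obtain \<sigma> where s: "singular_simplex n T \<sigma>"
      and xs: "xs = map (\<lambda>i. simplicial_vertex i \<sigma>) [0..<Suc n]"
      unfolding bar_gens_def by blast
    have "\<sigma> x \<in> topspace T" if "x \<in> standard_simplex n" for x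
    proof -
      have "continuous_map (subtopology (powertop_real UNIV) (standard_simplex n)) T \<sigma>"
        using s unfolding singular_simplex_def by blast
      then have "\<sigma> \<in> topspace (subtopology (powertop_real UNIV) (standard_simplex n)) \<rightarrow> topspace T"
        unfolding continuous_map_def by blast
      then have "\<sigma> \<in> standard_simplex n \<rightarrow> topspace T"
        by (simp only: topspace_standard_simplex)
      then show ?thesis using that by blast
    qed
    then have "simplicial_vertex i \<sigma> \<in> topspace T" if "i \<le> n" for i
      using that by (simp add: simplicial_vertex_def)
    then show "xs \<in> rack_gens (topspace T) (Suc n)"
      unfolding xs rack_gens_def by auto
  qed
next
  show "rack_gens (topspace T) (Suc n) \<subseteq> bar_gens T n"
  proof
    fix xs assume "xs \<in> rack_gens (topspace T) (Suc n)"
    then have len: "length xs = Suc n" and sub: "set xs \<subseteq> topspace T"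
      unfolding rack_gens_def by auto
    define \<sigma> where "\<sigma> = (\<lambda>x::nat\<Rightarrow>real. if x \<in> standard_simplex n
         then xs ! min n (LEAST i. x i = 1) else undefined)"
    have ss: "singular_simplex n T \<sigma>"
      unfolding singular_simplex_def
    proof
      show "continuous_map (subtopology (powertop_real UNIV) (standard_simplex n)) T \<sigma>"
      proof (rule indisc_cont[OF assms], rule Pi_I)
        fix x assume "x \<in> topspace (subtopology (powertop_real UNIV) (standard_simplex n))"
        then have x: "x \<in> standard_simplex n" by (simp only: topspace_standard_simplex)
        have "min n (LEAST i. x i = 1) < length xs" using len by simp
        then have "xs ! min n (LEAST i. x i = 1) \<in> set xs" by (rule nth_mem)
        then show "\<sigma> x \<in> topspace T" using sub x unfolding \<sigma>_def by auto
      qed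
      show "\<sigma> \<in> extensional (standard_simplex n)"
        by (simp add: \<sigma>_def extensional_def)
    qed
    have v: "simplicial_vertex i \<sigma> = xs ! i" if "i < Suc n" for i
    proof -
      have "(\<lambda>j. if j = i then 1 else (0::real)) \<in> standard_simplex n"
        using that by simp
      then show ?thesis
        unfolding simplicial_vertex_def \<sigma>_def least_basis using that
        by (simp add: min_absorb2)
    qed
    have "map (\<lambda>i. simplicial_vertex i \<sigma>) [0..<Suc n] = map (\<lambda>i. xs ! i) [0..<Suc n]"
      by (rule map_cong) (auto simp: v)
    also have "\<dots> = xs" using len map_nth by metis
    finally have "map (\<lambda>i. simplicial_vertex i \<sigma>) [0..<Suc n] = xs" .
    then show "xs \<in> bar_gens T n"
      unfolding bar_gens_def using ss by blast
  qed
qed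

lemma bar_fun_eq:
  assumes "indiscrete T"
  shows "bar_gens T = (\<lambda>m. rack_gens (topspace T) (Suc m))"
  using bar_eq[OF assms] by auto

lemma ch_shift:
  assumes "kernel (G (Suc 0)) (G 0) (d 0) = carrier (G (Suc 0))"
  shows "chain_homology (\<lambda>m. G (Suc m)) (\<lambda>m. d (Suc m)) n = chain_homology G d (Suc n)"
  by (cases n) (simp_all add: chain_homology_def assms)

lemma bd_len1:
  assumes "Poly_Mapping.keys c \<subseteq> {xs. length xs = Suc 0}"
  shows "bd op c = 0"
  unfolding bd_def
  by (rule frag_extend_eq_0) (use assms in \<open>auto simp: bd_gen_def\<close>)

lemma rack1: "rack_gens Q (Suc 0) \<subseteq> {xs. length xs = Suc 0}"
  by (auto simp: rack_gens_def)

lemma degen1: "degen_gens (rack_gens Q) (Suc 0) \<subseteq> {xs. length xs = Suc 0}"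
  by (auto simp: degen_gens_def rack_gens_def)

lemma bd_zero_carrier:
  assumes "S \<subseteq> {xs. length xs = Suc 0}" "x \<in> carrier (free_Abelian_group S)"
  shows "bd op x = 0"
proof -
  have "Poly_Mapping.keys x \<subseteq> S" using assms(2) by (simp add: free_Abelian_group_def)
  then show ?thesis using assms(1) by (intro bd_len1) (rule subset_trans)
qed

lemma ker_gen:
  assumes "S \<subseteq> {xs. length xs = Suc 0}"
  shows "kernel (free_Abelian_group S) (free_Abelian_group S') (bd op) = carrier (free_Abelian_group S)"
proof -
  have o: "\<one>\<^bsub>free_Abelian_group S'\<^esub> = 0" by (simp add: free_Abelian_group_def)
  show ?thesis unfolding kernel_def o using bd_zero_carrier[OF assms] by blast
qed

lemma kerR: "kernel (free_Abelian_group (rack_gens Q (Suc 0))) (free_Abelian_group (rack_gens Q 0)) (bd op)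
   = carrier (free_Abelian_group (rack_gens Q (Suc 0)))"
  by (rule ker_gen[OF rack1])

lemma kerD: "kernel (free_Abelian_group (degen_gens (rack_gens Q) (Suc 0)))
     (free_Abelian_group (degen_gens (rack_gens Q) 0)) (bd op)
   = carrier (free_Abelian_group (degen_gens (rack_gens Q) (Suc 0)))"
  by (rule ker_gen[OF degen1])

lemma degen_shift: "degen_gens (\<lambda>m. g (Suc m)) m = degen_gens g (Suc m)"
  by (simp add: degen_gens_def)

lemma qg_shift: "quot_group (\<lambda>m. g (Suc m)) = (\<lambda>m. quot_group g (Suc m))"
  unfolding quot_group_def degen_shift by (rule refl)

lemma qbd_shift: "quot_bd (\<lambda>m. g (Suc m)) op = (\<lambda>m. quot_bd g op (Suc m))"
  unfolding quot_bd_def degen_shift by (rule refl)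

lemma kerQ: "kernel (quot_group (rack_gens Q) (Suc 0)) (quot_group (rack_gens Q) 0)
    (quot_bd (rack_gens Q) op 0) = carrier (quot_group (rack_gens Q) (Suc 0))"
proof -
  let ?F1 = "free_Abelian_group (rack_gens Q (Suc 0))"
  let ?F0 = "free_Abelian_group (rack_gens Q 0)"
  let ?H1 = "carrier (free_Abelian_group (degen_gens (rack_gens Q) (Suc 0)))"
  let ?H0 = "carrier (free_Abelian_group (degen_gens (rack_gens Q) 0))"
  have H1sub: "?H1 \<subseteq> carrier ?F1"
    by (auto simp: free_Abelian_group_def degen_gens_def)
  have "quot_bd (rack_gens Q) op 0 A = ?H0" if A: "A \<in> rcosets\<^bsub>?F1\<^esub> ?H1" for A
  proof -
    obtain a where a: "a \<in> carrier ?F1" and Aa: "A = ?H1 #>\<^bsub>?F1\<^esub> a"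
      using A unfolding RCOSETS_def by blast
    have z: "(0::'a list \<Rightarrow>\<^sub>0 int) \<in> ?H1" by (simp add: free_Abelian_group_def)
    have "0 \<otimes>\<^bsub>?F1\<^esub> a = a" by (simp add: free_Abelian_group_def)
    then have aA: "a \<in> A" unfolding Aa r_coset_def using z by blast
    have Asub: "A \<subseteq> carrier ?F1"
      unfolding Aa by (rule monoid.r_coset_subset_G[OF group.is_monoid[OF group_free_Abelian_group] H1sub a])
    have b0: "bd op c = 0" if "c \<in> A" for c
      using bd_zero_carrier[OF rack1] Asub that by blast
    have c0: "?H0 #>\<^bsub>?F0\<^esub> 0 = ?H0"
      unfolding r_coset_def by (simp add: free_Abelian_group_def)
    have "(\<lambda>c. ?H0 #>\<^bsub>?F0\<^esub> bd op c) ` A = {?H0}"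
      using aA b0 c0 by force
    then show ?thesis unfolding quot_bd_def by simp
  qed
  moreover have "\<one>\<^bsub>quot_group (rack_gens Q) 0\<^esub> = ?H0"
    by (simp add: quot_group_def FactGroup_def)
  moreover have "carrier (quot_group (rack_gens Q) (Suc 0)) = rcosets\<^bsub>?F1\<^esub> ?H1"
    by (simp add: quot_group_def FactGroup_def)
  ultimately show ?thesis
    unfolding kernel_def by auto
qed

theorem mainTheorem10:
  fixes T :: "'a topology" and op :: "'a \<Rightarrow> 'a \<Rightarrow> 'a"
  assumes "topological_quandle T op" and "indiscrete T"
  shows "\<forall>n. homR (bar_gens T) op n \<cong> homR (rack_gens (topspace T)) op (Suc n)
           \<and> homD (bar_gens T) op n \<cong> homD (rack_gens (topspace T)) op (Suc n)
           \<and> homQ (bar_gens T) op n \<cong> homQ (rack_gens (topspace T)) op (Suc n)"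
proof
  fix n
  let ?g = "rack_gens (topspace T)"
  have R: "homR (bar_gens T) op n = homR ?g op (Suc n)"
    unfolding bar_fun_eq[OF assms(2)] homR_def
    using ch_shift[where G="\<lambda>m. free_Abelian_group (?g m)" and d="\<lambda>m. bd op", OF kerR] by simp
  have D: "homD (bar_gens T) op n = homD ?g op (Suc n)"
    unfolding bar_fun_eq[OF assms(2)] homD_def degen_shift
    using ch_shift[where G="\<lambda>m. free_Abelian_group (degen_gens ?g m)" and d="\<lambda>m. bd op", OF kerD] by simp
  have Q: "homQ (bar_gens T) op n = homQ ?g op (Suc n)"
    unfolding bar_fun_eq[OF assms(2)] homQ_def qg_shift qbd_shift
    using ch_shift[where G="quot_group ?g" and d="quot_bd ?g op", OF kerQ] by simp
  show "homR (bar_gens T) op n \<cong> homR ?g op (Suc n)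
           \<and> homD (bar_gens T) op n \<cong> homD ?g op (Suc n)
           \<and> homQ (bar_gens T) op n \<cong> homQ ?g op (Suc n)"
    unfolding R D Q by simp
qed

end
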